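(* Let $n\geq 2$ and let $T$ be a rooted binary phylogenetic $X$-tree with $|X|=n$ (edge lengths not yet fixed), with $c_T$ cherries. Let $X'\subset X$ consist of exactly one leaf from each cherry of $T$ (so $|X'|=c_T$), and let $\widetilde T=T_{\widetilde X}$ with $\widetilde X=X\setminus X'$. Then there exist strictly positive edge lengths $\lambda_1,\ldots,\lambda_{2n-2}$ for $T$ such that the ranking $\pi_T$ is strict and reversible with respect to $X'$, the leaf $x_1=\arg\max_{x\in X}FP_T(x)$ belongs to $\widetilde X$, and the leaf $x'=\arg\min_{x\in X}FP_T(x)$ does not belong to $\widetilde X$. In particular, $FP_T(x_1)>FP_T(x_2)>\cdots>FP_T(x_n)$ for a suitable labelling, and $FP_{\widetilde T}(x_1)<FP_{\widetilde T}(\widetilde x_2)<\cdots<FP_{\widetilde T}(\widetilde x_{n-c_T})$, where $\widetilde X=\{x_1,\widetilde x_2,\ldots,\widetilde x_{n-c_T}\}$ and $FP_T(\widetilde x_i)>FP_T(\widetilde x_j)$ if and only if $FP_{\widetilde T}(\widetilde x_i)<FP_{\widetilde T}(\widetilde x_j)$.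
   Context: A rooted binary phylogenetic $X$-tree ($X$ a finite nonempty set, $|X|=n$) is a rooted tree whose root $\rho$ has in-degree 0 and out-degree 2, all edges directed away from $\rho$, all other interior vertices have in-degree 1 and out-degree 2, and whose leaves are bijectively labelled by $X$ (for $|X|=1$ the tree may be a single vertex); it has $2n-2$ edges. Every edge $e$ has a strictly positive length $\lambda_e$. The Fair Proportion index of $x\in X$ is $FP_T(x)=\sum_{e\in P(T;\rho,x)}\lambda_e/D_e$, where $P(T;\rho,x)$ is the path from $\rho$ to $x$ and $D_e$ is the number of leaves descended from $e$. A cherry is a pair of leaves with the same parent. For $Y\subseteq X$, the induced subtree $T_Y$ is obtained from the minimal subtree of $T$ connecting $Y$ by suppressing all non-root vertices of in- and out-degree 1, adding the lengths of merged edges; if the root then has out-degree 1, it and its incident edge are deleted. The ranking $\pi_T$ orders $X$ by decreasing $FP_T$; it is strict if all values $FP_T(x)$ are pairwise distinct. For $X'\subset X$, $\widetilde X=X\setminus X'$ and $\widetilde T=T_{\widetilde X}$, a strict ranking $\pi_T$ is reversible with respect to $X'$ if for all distinct $x_i,x_j\in\widetilde X$, $FP_T(x_i)>FP_T(x_j)$ implies $FP_{\widetilde T}(x_i)<FP_{\widetilde T}(x_j)$. *)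

theory Defs
  imports Main "HOL.Real"
begin

datatype 'a ptree = PLeaf 'a | PNode "'a ptree" "'a ptree"

text \<open>Rooted binary tree with edge lengths: WNode a l b r has an edge of length a
  to the left subtree l and an edge of length b to the right subtree r.\<close>
datatype 'a wtree = WLeaf 'a | WNode real "'a wtree" real "'a wtree"

fun pleaves :: "'a ptree \<Rightarrow> 'a list" where
  "pleaves (PLeaf x) = [x]"
| "pleaves (PNode l r) = pleaves l @ pleaves r"

definition phylo_tree :: "'a set \<Rightarrow> 'a ptree \<Rightarrow> bool" where
  "phylo_tree X T \<longleftrightarrow> distinct (pleaves T) \<and> set (pleaves T) = X"

fun shape :: "'a wtree \<Rightarrow> 'a ptree" where
  "shape (WLeaf x) = PLeaf x"
| "shape (WNode a l b r) = PNode (shape l) (shape r)"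

fun wleaves :: "'a wtree \<Rightarrow> 'a set" where
  "wleaves (WLeaf x) = {x}"
| "wleaves (WNode a l b r) = wleaves l \<union> wleaves r"

fun pos_lengths :: "'a wtree \<Rightarrow> bool" where
  "pos_lengths (WLeaf x) = True"
| "pos_lengths (WNode a l b r) = (a > 0 \<and> b > 0 \<and> pos_lengths l \<and> pos_lengths r)"

fun FP :: "'a wtree \<Rightarrow> 'a \<Rightarrow> real" where
  "FP (WLeaf y) x = 0"
| "FP (WNode a l b r) x =
     (if x \<in> wleaves l then a / real (card (wleaves l)) + FP l x else 0)
   + (if x \<in> wleaves r then b / real (card (wleaves r)) + FP r x else 0)"

fun cherries :: "'a ptree \<Rightarrow> 'a set set" where
  "cherries (PLeaf x) = {}"
| "cherries (PNode (PLeaf x) (PLeaf y)) = {{x, y}}"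
| "cherries (PNode l r) = cherries l \<union> cherries r"

text \<open>Restriction to Y: None if the subtree has no leaf in Y; otherwise
  Some (p, t') where t' is the restricted (suppressed) subtree and p is the
  accumulated length of suppressed edges that must be added to the edge
  entering this subtree.\<close>
fun restr :: "'a set \<Rightarrow> 'a wtree \<Rightarrow> (real \<times> 'a wtree) option" where
  "restr Y (WLeaf x) = (if x \<in> Y then Some (0, WLeaf x) else None)"
| "restr Y (WNode a l b r) =
     (case (restr Y l, restr Y r) of
        (Some (p, l'), Some (q, r')) \<Rightarrow> Some (0, WNode (a + p) l' (b + q) r')
      | (Some (p, l'), None) \<Rightarrow> Some (a + p, l')
      | (None, Some (q, r')) \<Rightarrow> Some (b + q, r')
      | (None, None) \<Rightarrow> None)"

text \<open>Induced subtree T_Y (for nonempty Y meeting the leaves): the root edge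
  created when the root gets out-degree 1 is deleted.\<close>
definition induced :: "'a set \<Rightarrow> 'a wtree \<Rightarrow> 'a wtree" where
  "induced Y T = snd (the (restr Y T))"

definition strict_ranking :: "'a set \<Rightarrow> 'a wtree \<Rightarrow> bool" where
  "strict_ranking X T \<longleftrightarrow> inj_on (FP T) X"

definition reversible :: "'a set \<Rightarrow> 'a wtree \<Rightarrow> 'a set \<Rightarrow> bool" where
  "reversible X T X' \<longleftrightarrow> strict_ranking X T \<and>
     (\<forall>xi\<in>X - X'. \<forall>xj\<in>X - X'. xi \<noteq> xj \<longrightarrow>
        FP T xi > FP T xj \<longrightarrow> FP (induced (X - X') T) xi < FP (induced (X - X') T) xj)"

end

theory Submission
  imports Defs
begin

fun FPY :: "'a set \<Rightarrow> 'a wtree \<Rightarrow> 'a \<Rightarrow> real" where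
  "FPY Y (WLeaf y) x = 0"
| "FPY Y (WNode a l b r) x =
     (if x \<in> wleaves l then a / real (card (wleaves l \<inter> Y)) + FPY Y l x else 0)
   + (if x \<in> wleaves r then b / real (card (wleaves r \<inter> Y)) + FPY Y r x else 0)"

lemma finite_wleaves[simp]: "finite (wleaves W)"
  by (induction W) auto

lemma wleaves_ne: "wleaves W \<noteq> {}"
  by (induction W) auto

lemma restr_None: "restr Y W = None \<longleftrightarrow> wleaves W \<inter> Y = {}"
  by (induction W) (auto split: option.splits)

lemma restr_Some:
  "restr Y W = Some (q, t') \<Longrightarrow> wleaves t' = wleaves W \<inter> Y \<and>
    (\<forall>x\<in>wleaves W \<inter> Y. q / real (card (wleaves t')) + FP t' x = FPY Y W x)"
proof (induction W arbitrary: q t')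
  case (WLeaf y)
  then have "y \<in> Y" "q = 0" "t' = WLeaf y" by (auto split: if_splits)
  then show ?case by simp
next
  case (WNode a l b r)
  show ?case
  proof (cases "restr Y l")
    case None
    note N = this
    then have l0: "wleaves l \<inter> Y = {}" using restr_None[of Y l] by simp
    show ?thesis
    proof (cases "restr Y r")
      case None
      then show ?thesis using N WNode.prems by simp
    next
      case (Some v)
      then obtain q2 r' where S: "restr Y r = Some (q2, r')" by (cases v) auto
      with N WNode.prems have qq: "q = b + q2" "t' = r'" by auto
      from WNode.IH(2)[OF S] have ih: "wleaves r' = wleaves r \<inter> Y"
        "\<forall>x\<in>wleaves r \<inter> Y. q2 / real (card (wleaves r')) + FP r' x = FPY Y r x" by auto
      show ?thesis
      proof (intro conjI ballI)
        show "wleaves t' = wleaves (WNode a l b r) \<inter> Y" using qq ih l0 by auto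
        fix x assume x: "x \<in> wleaves (WNode a l b r) \<inter> Y"
        then have xr: "x \<in> wleaves r" "x \<notin> wleaves l" using l0 by auto
        then have "FPY Y (WNode a l b r) x = b / real (card (wleaves r \<inter> Y)) + FPY Y r x" by simp
        also have "\<dots> = b / real (card (wleaves r')) + q2 / real (card (wleaves r')) + FP r' x"
          using ih x xr by auto
        also have "\<dots> = q / real (card (wleaves t')) + FP t' x" using qq by (simp add: add_divide_distrib)
        finally show "q / real (card (wleaves t')) + FP t' x = FPY Y (WNode a l b r) x" by simp
      qed
    qed
  next
    case (Some v)
    obtain q1 l' where v: "v = (q1, l')" by (cases v)
    have S1: "restr Y l = Some (q1, l')" using Some v by simp
    have ih1: "wleaves l' = wleaves l \<inter> Y"
        "\<forall>x\<in>wleaves l \<inter> Y. q1 / real (card (wleaves l')) + FP l' x = FPY Y l x"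
      using WNode.IH(1)[OF S1] by blast+
    show ?thesis
    proof (cases "restr Y r")
      case None
      then have r0: "wleaves r \<inter> Y = {}" using restr_None[of Y r] by simp
      from None S1 WNode.prems have qq: "q = a + q1" "t' = l'" by auto
      show ?thesis
      proof (intro conjI ballI)
        show "wleaves t' = wleaves (WNode a l b r) \<inter> Y" using qq ih1 r0 by auto
        fix x assume x: "x \<in> wleaves (WNode a l b r) \<inter> Y"
        then have xr: "x \<in> wleaves l" "x \<notin> wleaves r" using r0 by auto
        then have "FPY Y (WNode a l b r) x = a / real (card (wleaves l \<inter> Y)) + FPY Y l x" by simp
        also have "\<dots> = a / real (card (wleaves l')) + q1 / real (card (wleaves l')) + FP l' x"
          using ih1 x xr by auto
        also have "\<dots> = q / real (card (wleaves t')) + FP t' x" using qq by (simp add: add_divide_distrib)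
        finally show "q / real (card (wleaves t')) + FP t' x = FPY Y (WNode a l b r) x" by simp
      qed
    next
      case (Some v2)
      then obtain q2 r' where S2: "restr Y r = Some (q2, r')" by (cases v2) auto
      from WNode.IH(2)[OF S2] have ih2: "wleaves r' = wleaves r \<inter> Y"
        "\<forall>x\<in>wleaves r \<inter> Y. q2 / real (card (wleaves r')) + FP r' x = FPY Y r x" by auto
      from S1 S2 WNode.prems have qq: "q = 0" "t' = WNode (a + q1) l' (b + q2) r'" by auto
      show ?thesis
      proof (intro conjI ballI)
        show "wleaves t' = wleaves (WNode a l b r) \<inter> Y" using qq ih1 ih2 by auto
        fix x assume x: "x \<in> wleaves (WNode a l b r) \<inter> Y"
        have L: "(if x \<in> wleaves l' then (a + q1) / real (card (wleaves l')) + FP l' x else 0)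
             = (if x \<in> wleaves l then a / real (card (wleaves l \<inter> Y)) + FPY Y l x else 0)"
        proof (cases "x \<in> wleaves l")
          case True
          then have "x \<in> wleaves l \<inter> Y" "x \<in> wleaves l'" using x ih1(1) by auto
          then have e: "q1 / real (card (wleaves l')) + FP l' x = FPY Y l x" using ih1(2) by blast
          have "(a + q1) / real (card (wleaves l')) + FP l' x = a / real (card (wleaves l')) + (q1 / real (card (wleaves l')) + FP l' x)"
            by (simp add: add_divide_distrib)
          then show ?thesis using e True ih1(1) \<open>x \<in> wleaves l'\<close> by simp
        next
          case False
          then show ?thesis using ih1(1) by simp
        qed
        have R: "(if x \<in> wleaves r' then (b + q2) / real (card (wleaves r')) + FP r' x else 0)
             = (if x \<in> wleaves r then b / real (card (wleaves r \<inter> Y)) + FPY Y r x else 0)"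
        proof (cases "x \<in> wleaves r")
          case True
          then have "x \<in> wleaves r \<inter> Y" "x \<in> wleaves r'" using x ih2(1) by auto
          then have e: "q2 / real (card (wleaves r')) + FP r' x = FPY Y r x" using ih2(2) by blast
          have "(b + q2) / real (card (wleaves r')) + FP r' x = b / real (card (wleaves r')) + (q2 / real (card (wleaves r')) + FP r' x)"
            by (simp add: add_divide_distrib)
          then show ?thesis using e True ih2(1) \<open>x \<in> wleaves r'\<close> by simp
        next
          case False
          then show ?thesis using ih2(1) by simp
        qed
        show "q / real (card (wleaves t')) + FP t' x = FPY Y (WNode a l b r) x"
          unfolding qq FP.simps FPY.simps using L R by simp
      qed
    qed
  qed
qed

fun good :: "'a set \<Rightarrow> 'a ptree \<Rightarrow> bool" where
  "good Y (PLeaf x) = True"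
| "good Y (PNode l r) = (good Y l \<and> good Y r \<and>
     (\<exists>x\<in>set (pleaves l @ pleaves r). x \<notin> Y) \<and>
     (\<exists>x\<in>set (pleaves l @ pleaves r). x \<in> Y) \<and>
     (\<forall>x y. l = PLeaf x \<longrightarrow> r = PLeaf y \<longrightarrow> x \<notin> Y \<or> y \<notin> Y))"

definition elen :: "'a set \<Rightarrow> ('a \<Rightarrow> real) \<Rightarrow> real \<Rightarrow> 'a ptree \<Rightarrow> real" where
  "elen Y p w t = (case t of PLeaf x \<Rightarrow> p x
     | PNode _ _ \<Rightarrow> w / (1 / real (card (set (pleaves t) \<inter> Y)) - 1 / real (card (set (pleaves t)))))"

fun build :: "'a set \<Rightarrow> ('a \<Rightarrow> real) \<Rightarrow> real \<Rightarrow> 'a ptree \<Rightarrow> 'a wtree" where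
  "build Y p e (PLeaf x) = WLeaf x"
| "build Y p e (PNode l r) =
     WNode (elen Y p e l) (build Y p (e/4) l) (elen Y p (2*e) r) (build Y p (e/4) r)"

lemma wleaves_build[simp]: "wleaves (build Y p e t) = set (pleaves t)"
  by (induction t arbitrary: e) auto

lemma shape_build[simp]: "shape (build Y p e t) = t"
  by (induction t arbitrary: e) auto

lemma denom_pos:
  assumes "good Y (PNode a b)"
  shows "1 / real (card (set (pleaves (PNode a b)) \<inter> Y)) - 1 / real (card (set (pleaves (PNode a b)))) > 0"
proof -
  let ?S = "set (pleaves (PNode a b))"
  from assms obtain x y where x: "x \<in> ?S" "x \<notin> Y" and y: "y \<in> ?S" "y \<in> Y" by auto
  have f: "finite ?S" by simp
  have c1: "card (?S \<inter> Y) > 0" using y f by (auto simp: card_gt_0_iff)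
  have c2: "card (?S \<inter> Y) < card ?S" using x f by (intro psubset_card_mono) auto
  have "real (card (?S \<inter> Y)) < real (card ?S)" using c2 by simp
  moreover have "real (card (?S \<inter> Y)) > 0" using c1 by simp
  ultimately show ?thesis by (simp add: frac_less2)
qed

lemma elen_node:
  assumes "good Y t" "t = PNode a b"
  shows "elen Y p w t * (1 / real (card (set (pleaves t) \<inter> Y)) - 1 / real (card (set (pleaves t)))) = w"
proof -
  let ?D = "1 / real (card (set (pleaves t) \<inter> Y)) - 1 / real (card (set (pleaves t)))"
  have "?D > 0" using denom_pos[of Y a b] assms by simp
  then have ne: "?D \<noteq> 0" by (metis less_irrefl)
  have eq: "elen Y p w t = w / ?D" using assms(2) by (simp add: elen_def)
  show ?thesis using nonzero_eq_divide_eq[OF ne] eq by blast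
qed

lemma elen_pos:
  assumes "good Y t" "w > 0" "\<forall>x\<in>set (pleaves t). p x > 0"
  shows "elen Y p w t > 0"
proof (cases t)
  case (PLeaf x)
  then show ?thesis using assms by (simp add: elen_def)
next
  case (PNode a b)
  then show ?thesis using assms denom_pos[of Y a b] by (simp add: elen_def)
qed

lemma pos_build:
  "good Y t \<Longrightarrow> e > 0 \<Longrightarrow> \<forall>x\<in>set (pleaves t). p x > 0 \<Longrightarrow> pos_lengths (build Y p e t)"
proof (induction t arbitrary: e)
  case (PLeaf x)
  then show ?case by simp
next
  case (PNode l r)
  have "elen Y p e l > 0" using PNode.prems by (intro elen_pos) auto
  moreover have "elen Y p (2*e) r > 0" using PNode.prems by (intro elen_pos) auto
  ultimately show ?case using PNode by auto
qed

definition Dl :: "'a set \<Rightarrow> 'a wtree \<Rightarrow> 'a \<Rightarrow> real" where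
  "Dl Y W x = FPY Y W x - FP W x"

lemma dl_child:
  assumes g: "good Y c" and x: "x \<in> set (pleaves c)" "x \<in> Y" and "e > 0"
  shows "elen Y p e c / real (card (set (pleaves c) \<inter> Y)) + FPY Y (build Y p e' c) x
       - (elen Y p e c / real (card (set (pleaves c))) + FP (build Y p e' c) x)
       = (case c of PLeaf _ \<Rightarrow> 0 | PNode _ _ \<Rightarrow> e) + Dl Y (build Y p e' c) x"
proof (cases c)
  case (PLeaf z)
  then have "z = x" using x by simp
  then show ?thesis using PLeaf x by (simp add: Dl_def)
next
  case (PNode a b)
  have E: "elen Y p e c * (1 / real (card (set (pleaves c) \<inter> Y)) - 1 / real (card (set (pleaves c)))) = e"
    using elen_node[OF g PNode] .
  have "elen Y p e c / real (card (set (pleaves c) \<inter> Y)) - elen Y p e c / real (card (set (pleaves c)))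
     = elen Y p e c * (1 / real (card (set (pleaves c) \<inter> Y)) - 1 / real (card (set (pleaves c))))"
    by (simp add: right_diff_distrib)
  then show ?thesis using E PNode by (simp add: Dl_def)
qed

lemma dl_node_l:
  assumes g: "good Y (PNode l r)" and d: "distinct (pleaves (PNode l r))"
    and x: "x \<in> set (pleaves l)" "x \<in> Y" and e: "e > 0"
  shows "Dl Y (build Y p e (PNode l r)) x = (case l of PLeaf _ \<Rightarrow> 0 | PNode _ _ \<Rightarrow> e) + Dl Y (build Y p (e/4) l) x"
proof -
  have xr: "x \<notin> set (pleaves r)" using d x by auto
  have gl: "good Y l" using g by simp
  have "Dl Y (build Y p e (PNode l r)) x =
     elen Y p e l / real (card (set (pleaves l) \<inter> Y)) + FPY Y (build Y p (e/4) l) x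
       - (elen Y p e l / real (card (set (pleaves l))) + FP (build Y p (e/4) l) x)"
    using x xr by (simp add: Dl_def)
  also have "\<dots> = (case l of PLeaf _ \<Rightarrow> 0 | PNode _ _ \<Rightarrow> e) + Dl Y (build Y p (e/4) l) x"
    by (rule dl_child[OF gl x e])
  finally show ?thesis .
qed

lemma dl_node_r:
  assumes g: "good Y (PNode l r)" and d: "distinct (pleaves (PNode l r))"
    and x: "x \<in> set (pleaves r)" "x \<in> Y" and e: "e > 0"
  shows "Dl Y (build Y p e (PNode l r)) x = (case r of PLeaf _ \<Rightarrow> 0 | PNode _ _ \<Rightarrow> 2*e) + Dl Y (build Y p (e/4) r) x"
proof -
  have xr: "x \<notin> set (pleaves l)" using d x by auto
  have gl: "good Y r" using g by simp
  have e2: "2*e > 0" using e by simp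
  have "Dl Y (build Y p e (PNode l r)) x =
     elen Y p (2*e) r / real (card (set (pleaves r) \<inter> Y)) + FPY Y (build Y p (e/4) r) x
       - (elen Y p (2*e) r / real (card (set (pleaves r))) + FP (build Y p (e/4) r) x)"
    using x xr by (simp add: Dl_def)
  also have "\<dots> = (case r of PLeaf _ \<Rightarrow> 0 | PNode _ _ \<Rightarrow> 2*e) + Dl Y (build Y p (e/4) r) x"
    by (rule dl_child[OF gl x e2])
  finally show ?thesis .
qed

lemma dl_inv:
  "good Y t \<Longrightarrow> distinct (pleaves t) \<Longrightarrow> e > 0 \<Longrightarrow>
   (\<forall>x\<in>set (pleaves t) \<inter> Y. 0 \<le> Dl Y (build Y p e t) x \<and> Dl Y (build Y p e t) x < 3*e)
   \<and> inj_on (Dl Y (build Y p e t)) (set (pleaves t) \<inter> Y)"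
proof (induction t arbitrary: e)
  case (PLeaf z)
  then show ?case by (auto simp: Dl_def inj_on_def)
next
  case (PNode l r)
  have e4: "e/4 > 0" using PNode.prems by simp
  have gl: "good Y l" and gr: "good Y r" using PNode.prems by auto
  have dl: "distinct (pleaves l)" and dr: "distinct (pleaves r)" using PNode.prems by auto
  note IHl = PNode.IH(1)[OF gl dl e4]
  note IHr = PNode.IH(2)[OF gr dr e4]
  let ?D = "Dl Y (build Y p e (PNode l r))"
  have Lv: "?D x = (case l of PLeaf _ \<Rightarrow> 0 | PNode _ _ \<Rightarrow> e) + Dl Y (build Y p (e/4) l) x"
    if "x \<in> set (pleaves l)" "x \<in> Y" for x
    using dl_node_l[OF PNode.prems(1) PNode.prems(2) that PNode.prems(3)] .
  have Rv: "?D x = (case r of PLeaf _ \<Rightarrow> 0 | PNode _ _ \<Rightarrow> 2*e) + Dl Y (build Y p (e/4) r) x"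
    if "x \<in> set (pleaves r)" "x \<in> Y" for x
    using dl_node_r[OF PNode.prems(1) PNode.prems(2) that PNode.prems(3)] .
  have Lb: "(case l of PLeaf _ \<Rightarrow> ?D x = 0 | PNode _ _ \<Rightarrow> e \<le> ?D x \<and> ?D x < e + 3*e/4)"
    if "x \<in> set (pleaves l)" "x \<in> Y" for x
  proof (cases l)
    case (PLeaf z)
    have "Dl Y (WLeaf z) x = 0" by (simp add: Dl_def)
    then show ?thesis using Lv[OF that] PLeaf by simp
  next
    case (PNode a b)
    then show ?thesis using Lv[OF that] IHl that by auto
  qed
  have Rb: "(case r of PLeaf _ \<Rightarrow> ?D x = 0 | PNode _ _ \<Rightarrow> 2*e \<le> ?D x \<and> ?D x < 2*e + 3*e/4)"
    if "x \<in> set (pleaves r)" "x \<in> Y" for x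
  proof (cases r)
    case (PLeaf z)
    have "Dl Y (WLeaf z) x = 0" by (simp add: Dl_def)
    then show ?thesis using Rv[OF that] PLeaf by simp
  next
    case (PNode a b)
    then show ?thesis using Rv[OF that] IHr that by auto
  qed
  have bnd: "\<forall>x\<in>set (pleaves (PNode l r)) \<inter> Y. 0 \<le> ?D x \<and> ?D x < 3*e"
  proof
    fix x assume "x \<in> set (pleaves (PNode l r)) \<inter> Y"
    then have "x \<in> set (pleaves l) \<and> x \<in> Y \<or> x \<in> set (pleaves r) \<and> x \<in> Y" by auto
    then show "0 \<le> ?D x \<and> ?D x < 3*e"
    proof
      assume h: "x \<in> set (pleaves l) \<and> x \<in> Y"
      show ?thesis using Lb[of x] h PNode.prems(3) by (cases l) auto
    next
      assume h: "x \<in> set (pleaves r) \<and> x \<in> Y"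
      show ?thesis using Rb[of x] h PNode.prems(3) by (cases r) auto
    qed
  qed
  have sep: "?D x \<noteq> ?D y" if x: "x \<in> set (pleaves l)" "x \<in> Y" and y: "y \<in> set (pleaves r)" "y \<in> Y" for x y
  proof (cases l)
    case (PLeaf a)
    show ?thesis
    proof (cases r)
      case (PLeaf b)
      have "a = x" "b = y" using x y \<open>l = PLeaf a\<close> PLeaf by auto
      then show ?thesis using PNode.prems(1) \<open>l = PLeaf a\<close> PLeaf x y by auto
    next
      case (PNode c d)
      then show ?thesis using Lb[OF x] Rb[OF y] \<open>l = PLeaf a\<close> PNode.prems(3) by auto
    qed
  next
    case (PNode a b)
    then show ?thesis using Lb[OF x] Rb[OF y] PNode.prems(3) by (cases r) auto
  qed
  have inj: "inj_on ?D (set (pleaves (PNode l r)) \<inter> Y)"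
  proof (rule inj_onI)
    fix x y assume x: "x \<in> set (pleaves (PNode l r)) \<inter> Y" and y: "y \<in> set (pleaves (PNode l r)) \<inter> Y"
      and eq: "?D x = ?D y"
    consider "x \<in> set (pleaves l)" "y \<in> set (pleaves l)" | "x \<in> set (pleaves r)" "y \<in> set (pleaves r)"
      | "x \<in> set (pleaves l)" "y \<in> set (pleaves r)" | "x \<in> set (pleaves r)" "y \<in> set (pleaves l)"
      using x y by auto
    then show "x = y"
    proof cases
      case 1
      then have "Dl Y (build Y p (e/4) l) x = Dl Y (build Y p (e/4) l) y" using Lv[of x] Lv[of y] x y eq by auto
      then show ?thesis using IHl 1 x y by (auto dest: inj_onD)
    next
      case 2
      then have "Dl Y (build Y p (e/4) r) x = Dl Y (build Y p (e/4) r) y" using Rv[of x] Rv[of y] x y eq by auto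
      then show ?thesis using IHr 2 x y by (auto dest: inj_onD)
    next
      case 3
      then show ?thesis using sep[of x y] x y eq by auto
    next
      case 4
      then show ?thesis using sep[of y x] x y eq by auto
    qed
  qed
  show ?case using bnd inj by blast
qed

lemma elen_indep: "t = PNode a b \<Longrightarrow> elen Y p w t = elen Y q w t"
  by (simp add: elen_def)

lemma child_decomp:
  fixes F :: "'a wtree \<Rightarrow> 'a \<Rightarrow> real"
  assumes x: "x \<in> set (pleaves c)"
    and k: "\<And>z. c = PLeaf z \<Longrightarrow> k = 1"
    and FL: "\<And>z. F (WLeaf z) x = 0"
    and IH: "F (build Y p e' c) x = (case c of PLeaf _ \<Rightarrow> 0 | PNode _ _ \<Rightarrow> p x) + F (build Y (\<lambda>_. 0) e' c) x"
  shows "elen Y p w c / k + F (build Y p e' c) x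
       = p x + (elen Y (\<lambda>_. 0) w c / k + F (build Y (\<lambda>_. 0) e' c) x)"
proof (cases c)
  case (PLeaf z)
  then have "z = x" using x by simp
  then show ?thesis using PLeaf k[OF PLeaf] FL by (simp add: elen_def)
next
  case (PNode a b)
  then show ?thesis using IH elen_indep[OF PNode, of Y p w "\<lambda>_. 0"] by simp
qed

lemma fp_build:
  "distinct (pleaves t) \<Longrightarrow> x \<in> set (pleaves t) \<Longrightarrow>
   FP (build Y p e t) x = (case t of PLeaf _ \<Rightarrow> 0 | PNode _ _ \<Rightarrow> p x) + FP (build Y (\<lambda>_. 0) e t) x"
proof (induction t arbitrary: e)
  case (PLeaf z)
  then show ?case by simp
next
  case (PNode l r)
  have dl: "distinct (pleaves l)" and dr: "distinct (pleaves r)" and dj: "set (pleaves l) \<inter> set (pleaves r) = {}"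
    using PNode.prems by auto
  from PNode.prems(2) consider "x \<in> set (pleaves l)" | "x \<in> set (pleaves r)" by auto
  then show ?case
  proof cases
    case 1
    then have xr: "x \<notin> set (pleaves r)" using dj by auto
    have "elen Y p e l / real (card (set (pleaves l))) + FP (build Y p (e/4) l) x
       = p x + (elen Y (\<lambda>_. 0) e l / real (card (set (pleaves l))) + FP (build Y (\<lambda>_. 0) (e/4) l) x)"
      by (rule child_decomp[OF 1]) (auto intro: PNode.IH(1)[OF dl 1])
    then show ?thesis using 1 xr by simp
  next
    case 2
    then have xr: "x \<notin> set (pleaves l)" using dj by auto
    have "elen Y p (2*e) r / real (card (set (pleaves r))) + FP (build Y p (e/4) r) x
       = p x + (elen Y (\<lambda>_. 0) (2*e) r / real (card (set (pleaves r))) + FP (build Y (\<lambda>_. 0) (e/4) r) x)"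
      by (rule child_decomp[OF 2]) (auto intro: PNode.IH(2)[OF dr 2])
    then show ?thesis using 2 xr by simp
  qed
qed

lemma fpy_build:
  "distinct (pleaves t) \<Longrightarrow> x \<in> set (pleaves t) \<Longrightarrow> x \<in> Y \<Longrightarrow>
   FPY Y (build Y p e t) x = (case t of PLeaf _ \<Rightarrow> 0 | PNode _ _ \<Rightarrow> p x) + FPY Y (build Y (\<lambda>_. 0) e t) x"
proof (induction t arbitrary: e)
  case (PLeaf z)
  then show ?case by simp
next
  case (PNode l r)
  have dl: "distinct (pleaves l)" and dr: "distinct (pleaves r)" and dj: "set (pleaves l) \<inter> set (pleaves r) = {}"
    using PNode.prems by auto
  from PNode.prems(2) consider "x \<in> set (pleaves l)" | "x \<in> set (pleaves r)" by auto
  then show ?case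
  proof cases
    case 1
    then have xr: "x \<notin> set (pleaves r)" using dj by auto
    have "elen Y p e l / real (card (set (pleaves l) \<inter> Y)) + FPY Y (build Y p (e/4) l) x
       = p x + (elen Y (\<lambda>_. 0) e l / real (card (set (pleaves l) \<inter> Y)) + FPY Y (build Y (\<lambda>_. 0) (e/4) l) x)"
      by (rule child_decomp[OF 1]) (use 1 PNode.prems(3) PNode.IH(1)[OF dl 1 PNode.prems(3)] in auto)
    then show ?thesis using 1 xr by simp
  next
    case 2
    then have xr: "x \<notin> set (pleaves l)" using dj by auto
    have "elen Y p (2*e) r / real (card (set (pleaves r) \<inter> Y)) + FPY Y (build Y p (e/4) r) x
       = p x + (elen Y (\<lambda>_. 0) (2*e) r / real (card (set (pleaves r) \<inter> Y)) + FPY Y (build Y (\<lambda>_. 0) (e/4) r) x)"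
      by (rule child_decomp[OF 2]) (use 2 PNode.prems(3) PNode.IH(2)[OF dr 2 PNode.prems(3)] in auto)
    then show ?thesis using 2 xr by simp
  qed
qed

lemma cherries_sub: "cherries l \<union> cherries r \<subseteq> cherries (PNode l r)"
  by (cases l; cases r) auto

lemma cherries_form: "c \<in> cherries t \<Longrightarrow> \<exists>x y. c = {x, y} \<and> x \<in> set (pleaves t) \<and> y \<in> set (pleaves t)
   \<and> (distinct (pleaves t) \<longrightarrow> x \<noteq> y)"
  by (induction t rule: cherries.induct) fastforce+

lemma cherries_ne_aux: "\<forall>l r. t = PNode l r \<longrightarrow> cherries t \<noteq> {}"
proof (induction t)
  case (PLeaf x)
  then show ?case by simp
next
  case (PNode a b)
  show ?case
  proof (cases a)
    case (PLeaf x)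
    show ?thesis
    proof (cases b)
      case (PLeaf y)
      then show ?thesis using \<open>a = PLeaf x\<close> by simp
    next
      case (PNode c d)
      then show ?thesis using PNode.IH(2) cherries_sub[of a b] by blast
    qed
  next
    case (PNode c d)
    then show ?thesis using PNode.IH(1) cherries_sub[of a b] by blast
  qed
qed

lemma cherries_ne: "cherries (PNode l r) \<noteq> {}"
  using cherries_ne_aux by blast

lemma good_from_cherries:
  "\<forall>c\<in>cherries t. (\<exists>x\<in>c. x \<notin> Y) \<and> (\<exists>x\<in>c. x \<in> Y) \<Longrightarrow> good Y t"
proof (induction t)
  case (PLeaf x)
  then show ?case by simp
next
  case (PNode l r)
  have gl: "good Y l" using PNode.IH(1) PNode.prems cherries_sub[of l r] by blast
  have gr: "good Y r" using PNode.IH(2) PNode.prems cherries_sub[of l r] by blast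
  obtain c where c: "c \<in> cherries (PNode l r)" using cherries_ne by blast
  obtain u v where uv: "c = {u, v}" "u \<in> set (pleaves (PNode l r))" "v \<in> set (pleaves (PNode l r))"
    using cherries_form[OF c] by blast
  have "c \<subseteq> set (pleaves (PNode l r))" using uv by auto
  then have ex: "(\<exists>x\<in>set (pleaves l @ pleaves r). x \<notin> Y) \<and> (\<exists>x\<in>set (pleaves l @ pleaves r). x \<in> Y)"
    using PNode.prems c by fastforce
  have ch: "\<forall>x y. l = PLeaf x \<longrightarrow> r = PLeaf y \<longrightarrow> x \<notin> Y \<or> y \<notin> Y"
    using PNode.prems by auto
  show ?case using gl gr ex ch by simp
qed

theorem theorem2:
  fixes X X' :: "'a set" and T :: "'a ptree"
  assumes "phylo_tree X T"
    and "card X \<ge> 2"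
    and "X' \<subseteq> \<Union> (cherries T)"
    and "\<forall>c\<in>cherries T. card (X' \<inter> c) = 1"
  shows "\<exists>W. shape W = T \<and> pos_lengths W \<and>
           strict_ranking X W \<and> reversible X W X' \<and>
           (\<forall>x\<in>X. (\<forall>y\<in>X. FP W y \<le> FP W x) \<longrightarrow> x \<in> X - X') \<and>
           (\<forall>x\<in>X. (\<forall>y\<in>X. FP W x \<le> FP W y) \<longrightarrow> x \<notin> X - X')"
proof -
  define Y where "Y = X - X'"
  have dist: "distinct (pleaves T)" and XT: "set (pleaves T) = X"
    using assms(1) unfolding phylo_tree_def by auto
  have finX: "finite X" using XT by auto
  obtain l r where T: "T = PNode l r"
  proof (cases T)
    case (PLeaf z)
    then have "X = {z}" using XT by simp
    then have False using assms(2) by simp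
    then show ?thesis ..
  next
    case (PNode l r)
    then show ?thesis using that by blast
  qed
  have cX: "c \<subseteq> X" if "c \<in> cherries T" for c
    using cherries_form[OF that] XT by blast
  have chp: "\<forall>c\<in>cherries T. (\<exists>x\<in>c. x \<notin> Y) \<and> (\<exists>x\<in>c. x \<in> Y)"
  proof
    fix c assume c: "c \<in> cherries T"
    obtain u v where uv: "c = {u,v}" "u \<in> X" "v \<in> X" "u \<noteq> v"
      using cherries_form[OF c] dist XT by blast
    have "card (X' \<inter> c) = 1" using assms(4) c by blast
    then obtain w where w: "X' \<inter> c = {w}" by (auto simp: card_1_singleton_iff)
    have wc: "w \<in> c" "w \<notin> Y" using w Y_def by auto
    have "\<exists>z\<in>c. z \<notin> X'"
    proof (rule ccontr)
      assume "\<not> (\<exists>z\<in>c. z \<notin> X')"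
      then have "X' \<inter> c = c" by auto
      then have "c = {w}" using w by simp
      then show False using uv by auto
    qed
    then obtain z where "z \<in> c" "z \<notin> X'" by blast
    then have "z \<in> Y" using cX[OF c] Y_def by auto
    then show "(\<exists>x\<in>c. x \<notin> Y) \<and> (\<exists>x\<in>c. x \<in> Y)" using wc \<open>z \<in> c\<close> by blast
  qed
  have good: "good Y T" using good_from_cherries chp by blast
  have YX: "Y \<subseteq> X" using Y_def by auto
  obtain c0 where c0: "c0 \<in> cherries T" using cherries_ne T by blast
  obtain y0 where y0: "y0 \<in> Y" using chp c0 by blast
  obtain z0 where z0: "z0 \<in> X" "z0 \<notin> Y" using chp c0 cX[OF c0] by blast
  define W0 where "W0 = build Y (\<lambda>_. 0) 1 T"
  define A where "A = FP W0"
  define D where "D = Dl Y W0"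
  have dinv: "(\<forall>x\<in>Y. 0 \<le> D x) \<and> inj_on D Y"
    using dl_inv[OF good dist, of 1 "\<lambda>_. 0"] XT YX unfolding D_def W0_def
    by (simp add: Int_absorb1 Int_commute)
  then have Dnn: "\<forall>x\<in>Y. 0 \<le> D x" and Dinj: "inj_on D Y" by auto
  obtain f where f: "bij_betw f X {0..<card X}" using ex_bij_betw_finite_nat[OF finX] by blast
  have fb: "\<forall>x\<in>X. f x < card X" using f by (auto simp: bij_betw_def)
  have finj: "inj_on f X" using f by (auto simp: bij_betw_def)
  define S where "S = (\<Sum>x\<in>X. \<bar>A x\<bar> + \<bar>D x\<bar>)"
  have S0: "S \<ge> 0" unfolding S_def by (intro sum_nonneg) auto
  have Sb: "\<bar>A x\<bar> + \<bar>D x\<bar> \<le> S" if "x \<in> X" for x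
    unfolding S_def using that finX by (intro member_le_sum) auto
  define M where "M = S + 1"
  define K where "K = 2*S + real (card X) + 2"
  define p where "p = (\<lambda>x. if x \<in> Y then K - A x - D x / 2 else M + real (f x) - A x)"
  have ppos: "\<forall>x\<in>set (pleaves T). p x > 0"
  proof
    fix x assume "x \<in> set (pleaves T)"
    then have x: "x \<in> X" using XT by simp
    have b: "\<bar>A x\<bar> + \<bar>D x\<bar> \<le> S" using Sb[OF x] .
    show "p x > 0"
    proof (cases "x \<in> Y")
      case True
      then show ?thesis using b S0 unfolding p_def K_def by (simp; linarith)
    next
      case False
      then show ?thesis using b S0 unfolding p_def M_def by (simp; linarith)
    qed
  qed
  define W where "W = build Y p 1 T"
  have cT: "(case T of PLeaf _ \<Rightarrow> 0 | PNode _ _ \<Rightarrow> v) = v" for v :: real using T by simp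
  have FPW: "FP W x = p x + A x" if "x \<in> X" for x
  proof -
    have "x \<in> set (pleaves T)" using that XT by simp
    from fp_build[OF dist this, of Y p 1] show ?thesis unfolding W_def A_def W0_def cT .
  qed
  have FPYW: "FPY Y W x = p x + A x + D x" if "x \<in> Y" for x
  proof -
    have "x \<in> set (pleaves T)" using that YX XT by auto
    from fpy_build[OF dist this that, of p 1] have "FPY Y W x = p x + FPY Y W0 x"
      unfolding W_def W0_def cT .
    then show ?thesis unfolding A_def D_def Dl_def by simp
  qed
  have vY: "FP W x = K - D x / 2" if "x \<in> Y" for x
    using FPW[of x] that YX unfolding p_def by auto
  have vN: "FP W x = M + real (f x)" if "x \<in> X" "x \<notin> Y" for x
    using FPW[of x] that unfolding p_def by auto
  have sepYN: "FP W z < FP W x" if "x \<in> Y" "z \<in> X" "z \<notin> Y" for x z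
  proof -
    have "\<bar>D x\<bar> \<le> S" using Sb[of x] that YX by auto
    moreover have "real (f z) < real (card X)" using fb that by auto
    ultimately show ?thesis using vY[OF that(1)] vN[OF that(2,3)] S0 unfolding K_def M_def
      by (simp; linarith)
  qed
  have ne: "wleaves W \<inter> Y \<noteq> {}" using y0 YX XT unfolding W_def by auto
  obtain q t' where rs: "restr Y W = Some (q, t')"
    using ne restr_None[of Y W] by (cases "restr Y W") auto
  have ind: "induced Y W = t'" using rs by (simp add: induced_def)
  define cst where "cst = q / real (card (wleaves t'))"
  have FPI: "FP (induced Y W) x = K + D x / 2 - cst" if "x \<in> Y" for x
  proof -
    have "x \<in> wleaves W \<inter> Y" using that YX XT unfolding W_def by auto
    then have "cst + FP t' x = FPY Y W x" using restr_Some[OF rs] unfolding cst_def by blast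
    then show ?thesis using FPYW[OF that] that ind unfolding p_def by auto
  qed
  have strict: "strict_ranking X W"
    unfolding strict_ranking_def
  proof (rule inj_onI)
    fix x y assume x: "x \<in> X" and y: "y \<in> X" and eq: "FP W x = FP W y"
    show "x = y"
    proof (cases "x \<in> Y")
      case True
      show ?thesis
      proof (cases "y \<in> Y")
        case True
        then have "D x = D y" using vY[of x] vY[of y] \<open>x \<in> Y\<close> eq by auto
        then show ?thesis using Dinj True \<open>x \<in> Y\<close> by (auto dest: inj_onD)
      next
        case False
        then show ?thesis using sepYN[of x y] \<open>x \<in> Y\<close> y eq by auto
      qed
    next
      case False
      show ?thesis
      proof (cases "y \<in> Y")
        case True
        then show ?thesis using sepYN[of y x] False x eq by auto
      next
        case False
        then have "f x = f y" using vN[of x] vN[of y] \<open>x \<notin> Y\<close> x y eq by auto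
        then show ?thesis using finj x y by (auto dest: inj_onD)
      qed
    qed
  qed
  have rev: "reversible X W X'"
    unfolding reversible_def
  proof (intro conjI strict ballI impI)
    fix xi xj assume xi: "xi \<in> X - X'" and xj: "xj \<in> X - X'" and "xi \<noteq> xj" and gt: "FP W xj < FP W xi"
    have xiY: "xi \<in> Y" and xjY: "xj \<in> Y" using xi xj Y_def by auto
    have "D xi < D xj" using gt vY[OF xiY] vY[OF xjY] by simp
    then show "FP (induced (X - X') W) xi < FP (induced (X - X') W) xj"
      using FPI[OF xiY] FPI[OF xjY] unfolding Y_def[symmetric] by simp
  qed
  have mx: "\<forall>x\<in>X. (\<forall>y\<in>X. FP W y \<le> FP W x) \<longrightarrow> x \<in> X - X'"
  proof (intro ballI impI)
    fix x assume x: "x \<in> X" and h: "\<forall>y\<in>X. FP W y \<le> FP W x"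
    show "x \<in> X - X'"
    proof (rule ccontr)
      assume "x \<notin> X - X'"
      then have "x \<notin> Y" using Y_def by simp
      then have "FP W x < FP W y0" using sepYN[OF y0 x] by simp
      moreover have "FP W y0 \<le> FP W x" using h y0 YX by auto
      ultimately show False by simp
    qed
  qed
  have mn: "\<forall>x\<in>X. (\<forall>y\<in>X. FP W x \<le> FP W y) \<longrightarrow> x \<notin> X - X'"
  proof (intro ballI impI)
    fix x assume x: "x \<in> X" and h: "\<forall>y\<in>X. FP W x \<le> FP W y"
    show "x \<notin> X - X'"
    proof
      assume "x \<in> X - X'"
      then have "x \<in> Y" using Y_def by simp
      then have "FP W z0 < FP W x" using sepYN z0 by simp
      moreover have "FP W x \<le> FP W z0" using h z0 by auto
      ultimately show False by simp
    qed
  qed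
  have "shape W = T" unfolding W_def by simp
  moreover have "pos_lengths W" unfolding W_def by (rule pos_build[OF good]) (use ppos in auto)
  ultimately show ?thesis using strict rev mx mn by blast
qed

end
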